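(* Let $g$ be a flat metric near a boundary point $x_0$ of a manifold with boundary, using Fermi coordinates (tangential indices $\alpha,\beta$, normal index $n$), and suppose the boundary is umbilic for $g$ with principal curvature $\mu$, i.e. $L_{\alpha\beta}=\mu g_{\alpha\beta}$. Let $u$ be a smooth function, $\hat g=e^{-2u}g$, and $\hat A=\nabla^2u+du\otimes du-\frac12|\nabla u|^2g$ (the Schouten tensor of $\hat g$). Suppose the second fundamental form of $\hat g$ satisfies $\hat L_{\alpha\beta}=\hat\mu\,\hat g_{\alpha\beta}$ near $x_0$ for some constant $\hat\mu$. Let $F=F(\sigma_1(g^{-1}\hat A),\dots,\sigma_n(g^{-1}\hat A))$ for a differentiable function $F$ of $n$ variables, and $F^{ij}=\partial F/\partial\hat A_{ij}$. Then at $x_0$: (a) $F^{\alpha n}=0$ for all tangential $\alpha$; (b) $\hat A_{\alpha\beta,n}=2\mu\hat A_{\alpha\beta}-\hat\mu e^{-u}\big(\hat A_{\alpha\beta}+\hat A_{nn}g_{\alpha\beta}\big)$.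
   Context: Fermi coordinates: $(x_1,\dots,x_{n-1})$ a chart on the boundary and $x_n$ the arclength along normal geodesics, so $g=dx^ndx^n+g_{\alpha\beta}dx^\alpha dx^\beta$. Covariant derivatives are with respect to $g$; $\hat A_{\alpha\beta,n}$ is the covariant derivative of $\hat A$ in the unit inner normal direction $n$. $\sigma_k(g^{-1}\hat A)$ is the $k$-th elementary symmetric function of the eigenvalues of $g^{-1}\hat A$. *)

theory Defs
  imports "HOL-Analysis.Analysis" "HOL-Computational_Algebra.Polynomial"
begin

text \<open>The index type 'n
  indexes the coordinates; a distinguished index nn is the normal coordinate
  x_n of the Fermi chart, the boundary is {x. x$nn = 0} and the manifold side
  is {x. x$nn \<ge> 0}.\<close>

definition pd :: "'n::finite \<Rightarrow> (real^'n \<Rightarrow> real) \<Rightarrow> real^'n \<Rightarrow> real" where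
  "pd i f x = deriv (\<lambda>t. f (x + t *\<^sub>R axis i 1)) 0"

definition smooth_on :: "(real^'n::finite) set \<Rightarrow> (real^'n \<Rightarrow> real) \<Rightarrow> bool" where
  "smooth_on U f \<longleftrightarrow> (\<forall>is. (foldr pd is f) differentiable_on U)"

definition ginv :: "(real^'n::finite \<Rightarrow> real^'n^'n) \<Rightarrow> real^'n \<Rightarrow> real^'n^'n" where
  "ginv g x = matrix_inv (g x)"

definition christ :: "(real^'n::finite \<Rightarrow> real^'n^'n) \<Rightarrow> 'n \<Rightarrow> 'n \<Rightarrow> 'n \<Rightarrow> real^'n \<Rightarrow> real" where
  "christ g k i j x = (1/2) * (\<Sum>l\<in>UNIV. ginv g x $ k $ l *
      (pd i (\<lambda>y. g y $ j $ l) x + pd j (\<lambda>y. g y $ i $ l) x - pd l (\<lambda>y. g y $ i $ j) x))"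

definition riemann :: "(real^'n::finite \<Rightarrow> real^'n^'n) \<Rightarrow> 'n \<Rightarrow> 'n \<Rightarrow> 'n \<Rightarrow> 'n \<Rightarrow> real^'n \<Rightarrow> real" where
  "riemann g l i j k x = pd i (christ g l j k) x - pd j (christ g l i k) x
     + (\<Sum>m\<in>UNIV. christ g l i m x * christ g m j k x - christ g l j m x * christ g m i k x)"

definition flat_at :: "(real^'n::finite \<Rightarrow> real^'n^'n) \<Rightarrow> real^'n \<Rightarrow> bool" where
  "flat_at g x \<longleftrightarrow> (\<forall>l i j k. riemann g l i j k x = 0)"

text \<open>Unit inner normal (w.r.t. metric h) to the boundary {x$nn = 0}:
  nu^j = h^{j nn} / sqrt(h^{nn nn}), i.e. the normalized h-gradient of x_n.\<close>
definition inner_normal :: "(real^'n::finite \<Rightarrow> real^'n^'n) \<Rightarrow> 'n \<Rightarrow> real^'n \<Rightarrow> 'n \<Rightarrow> real" where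
  "inner_normal h nn x j = ginv h x $ j $ nn / sqrt (ginv h x $ nn $ nn)"

text \<open>Second fundamental form L_{ab} = h(nabla_{d_a} d_b, nu), nu the unit inner normal.\<close>
definition sff :: "(real^'n::finite \<Rightarrow> real^'n^'n) \<Rightarrow> 'n \<Rightarrow> 'n \<Rightarrow> 'n \<Rightarrow> real^'n \<Rightarrow> real" where
  "sff h nn a b x = (\<Sum>k\<in>UNIV. \<Sum>j\<in>UNIV. christ h k a b x * h x $ k $ j * inner_normal h nn x j)"

definition conf :: "(real^'n::finite \<Rightarrow> real^'n^'n) \<Rightarrow> (real^'n \<Rightarrow> real) \<Rightarrow> real^'n \<Rightarrow> real^'n^'n" where
  "conf g u x = exp (- 2 * u x) *\<^sub>R g x"

definition hess :: "(real^'n::finite \<Rightarrow> real^'n^'n) \<Rightarrow> (real^'n \<Rightarrow> real) \<Rightarrow> 'n \<Rightarrow> 'n \<Rightarrow> real^'n \<Rightarrow> real" where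
  "hess g u i j x = pd i (pd j u) x - (\<Sum>k\<in>UNIV. christ g k i j x * pd k u x)"

definition gradnorm2 :: "(real^'n::finite \<Rightarrow> real^'n^'n) \<Rightarrow> (real^'n \<Rightarrow> real) \<Rightarrow> real^'n \<Rightarrow> real" where
  "gradnorm2 g u x = (\<Sum>i\<in>UNIV. \<Sum>j\<in>UNIV. ginv g x $ i $ j * pd i u x * pd j u x)"

definition Ahat :: "(real^'n::finite \<Rightarrow> real^'n^'n) \<Rightarrow> (real^'n \<Rightarrow> real) \<Rightarrow> real^'n \<Rightarrow> real^'n^'n" where
  "Ahat g u x = (\<chi> i j. hess g u i j x + pd i u x * pd j u x - (1/2) * gradnorm2 g u x * g x $ i $ j)"

definition cov2 :: "(real^'n::finite \<Rightarrow> real^'n^'n) \<Rightarrow> (real^'n \<Rightarrow> real^'n^'n) \<Rightarrow> 'n \<Rightarrow> 'n \<Rightarrow> 'n \<Rightarrow> real^'n \<Rightarrow> real" where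
  "cov2 g T a b c x = pd c (\<lambda>y. T y $ a $ b) x
     - (\<Sum>k\<in>UNIV. christ g k c a x * T x $ k $ b + christ g k c b x * T x $ a $ k)"

text \<open>Characteristic polynomial det(tI - A) and sigma_k(A), the k-th elementary
  symmetric function of the eigenvalues of A (counted with multiplicity):
  det(tI - A) = sum_k (-1)^k sigma_k(A) t^(n-k).\<close>
definition charpoly :: "real^'n::finite^'n \<Rightarrow> real poly" where
  "charpoly A = det (\<chi> i j. (if i = j then [:0, 1:] else 0) - [:A $ i $ j:])"

definition esym :: "nat \<Rightarrow> real^'n::finite^'n \<Rightarrow> real" where
  "esym k A = (-1) ^ k * coeff (charpoly A) (CARD('n) - k)"

text \<open>F^{ij} = dF/dAhat_{ij} where F is regarded as the function
  M \<mapsto> F(sigma_1(g0^{-1} M), ..., sigma_n(g0^{-1} M)) of the matrix entries;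
  idx enumerates the n arguments of F (bijection 'n -> {1..n}).\<close>
definition Fcoef :: "(real^'n::finite \<Rightarrow> real) \<Rightarrow> ('n \<Rightarrow> nat) \<Rightarrow> real^'n^'n \<Rightarrow> real^'n^'n
    \<Rightarrow> 'n \<Rightarrow> 'n \<Rightarrow> real" where
  "Fcoef F idx g0 A i j = deriv (\<lambda>t. F (\<chi> m. esym (idx m)
      (matrix_inv g0 ** (A + t *\<^sub>R (\<chi> a b. if a = i \<and> b = j then 1 else 0))))) 0"

end

theory Submission
  imports Defs
begin

lemma line_has_deriv_aux:
  fixes f :: "real^'n::finite \<Rightarrow> real"
  assumes f': "(f has_derivative f') (at (y + s *\<^sub>R v))"
  shows "((\<lambda>t. f (y + t *\<^sub>R v)) has_field_derivative f' v) (at s)"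
proof -
  have lin: "linear f'" using f' has_derivative_linear by blast
  have l1: "((\<lambda>t. y + t *\<^sub>R v) has_derivative (\<lambda>t. t *\<^sub>R v)) (at s)"
    by (auto intro!: derivative_eq_intros)
  have "((\<lambda>t. f (y + t *\<^sub>R v)) has_derivative (\<lambda>t. f' (t *\<^sub>R v))) (at s)"
    using diff_chain_at[OF l1 f'] by (simp add: o_def)
  moreover have "(\<lambda>t. f' (t *\<^sub>R v)) = (*) (f' v)"
    using lin by (auto simp: linear_cmul)
  ultimately show ?thesis unfolding has_field_derivative_def by simp
qed

lemma line_deriv:
  fixes f :: "real^'n::finite \<Rightarrow> real"
  assumes "f differentiable (at (y + s *\<^sub>R axis i 1))"
  shows "((\<lambda>t. f (y + t *\<^sub>R axis i 1)) has_field_derivative pd i f (y + s *\<^sub>R axis i 1)) (at s)"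
proof -
  obtain f' where f': "(f has_derivative f') (at (y + s *\<^sub>R axis i 1))"
    using assms by (auto simp: differentiable_def)
  have A: "((\<lambda>t. f (y + t *\<^sub>R axis i 1)) has_field_derivative f' (axis i 1)) (at s)"
    by (rule line_has_deriv_aux[OF f'])
  have "((\<lambda>t. f ((y + s *\<^sub>R axis i 1) + t *\<^sub>R axis i 1)) has_field_derivative f' (axis i 1)) (at 0)"
    by (rule line_has_deriv_aux) (use f' in simp)
  hence "pd i f (y + s *\<^sub>R axis i 1) = f' (axis i 1)"
    unfolding pd_def by (rule DERIV_imp_deriv)
  thus ?thesis using A by simp
qed

lemma line_deriv0:
  fixes f :: "real^'n::finite \<Rightarrow> real"
  assumes "f differentiable (at y)"
  shows "((\<lambda>t. f (y + t *\<^sub>R axis i 1)) has_field_derivative pd i f y) (at 0)"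
  using line_deriv[of f y 0 i] assms by simp

lemma pd_from_deriv:
  assumes "((\<lambda>t. f (y + t *\<^sub>R axis i 1)) has_field_derivative D) (at 0)"
  shows "pd i f y = D"
  unfolding pd_def using assms by (rule DERIV_imp_deriv)

lemma pd_cong_ev:
  assumes "eventually (\<lambda>t. f (y + t *\<^sub>R axis i 1) = h (y + t *\<^sub>R axis i 1)) (nhds 0)"
  shows "pd i f y = pd i h y"
proof -
  have "\<And>D. ((\<lambda>t. f (y + t *\<^sub>R axis i 1)) has_field_derivative D) (at 0) \<longleftrightarrow>
          ((\<lambda>t. h (y + t *\<^sub>R axis i 1)) has_field_derivative D) (at 0)"
    by (rule DERIV_cong_ev) (use assms in auto)
  thus ?thesis unfolding pd_def deriv_def by simp
qed

lemma halfline_unique: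
  fixes q :: "real \<Rightarrow> real"
  assumes "(q has_field_derivative D) (at 0)" and "e > 0" and "\<forall>t. 0 \<le> t \<and> t < e \<longrightarrow> q t = 0"
  shows "D = 0"
proof -
  have "((\<lambda>t. (q t - q 0) / (t - 0)) \<longlongrightarrow> D) (at 0)"
    using assms(1) unfolding has_field_derivative_iff by simp
  hence L: "((\<lambda>t. (q t - q 0) / (t - 0)) \<longlongrightarrow> D) (at_right 0)"
    by (rule tendsto_within_subset) auto
  have "eventually (\<lambda>t. (q t - q 0) / (t - 0) = 0) (at_right (0::real))"
    unfolding eventually_at_right_field using assms(2,3) by (intro exI[of _ e]) auto
  hence "((\<lambda>t. (q t - q 0) / (t - 0)) \<longlongrightarrow> 0) (at_right 0)"
    by (rule tendsto_eventually)
  from tendsto_unique[OF _ L this] show ?thesis by simp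
qed

lemma halfline_eq:
  assumes "((\<lambda>t. f (y + t *\<^sub>R v)) has_field_derivative Df) (at 0)"
    and "((\<lambda>t. h (y + t *\<^sub>R v)) has_field_derivative Dh) (at 0)"
    and "e > 0" and "\<forall>t. 0 \<le> t \<and> t < e \<longrightarrow> f (y + t *\<^sub>R v) = h (y + t *\<^sub>R v)"
  shows "Df = Dh"
proof -
  have "((\<lambda>t. f (y + t *\<^sub>R v) - h (y + t *\<^sub>R v)) has_field_derivative Df - Dh) (at 0)"
    using assms(1,2) by (rule DERIV_diff)
  from halfline_unique[OF this assms(3)] assms(4) show ?thesis by simp
qed

lemma smooth_pd: "smooth_on U f \<Longrightarrow> smooth_on U (pd i f)"
  unfolding smooth_on_def
proof
  fix "is" assume "\<forall>is. foldr pd is f differentiable_on U"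
  hence "foldr pd (is @ [i]) f differentiable_on U" by blast
  thus "foldr pd is (pd i f) differentiable_on U" by simp
qed

lemma smooth_diff: "smooth_on U f \<Longrightarrow> open U \<Longrightarrow> y \<in> U \<Longrightarrow> f differentiable (at y)"
  unfolding smooth_on_def
  by (metis at_within_open differentiable_on_def foldr.simps(1) id_apply)

lemma dist_two:
  fixes x :: "real^'n::finite"
  assumes "\<bar>s\<bar> \<le> h" "\<bar>k\<bar> \<le> h"
  shows "dist (x + s *\<^sub>R axis i 1 + k *\<^sub>R axis j 1) x \<le> 2*h"
proof -
  have "dist (x + s *\<^sub>R axis i 1 + k *\<^sub>R axis j 1) x = norm (s *\<^sub>R axis i (1::real) + k *\<^sub>R axis j 1)"
    by (simp add: dist_norm)
  also have "\<dots> \<le> norm (s *\<^sub>R axis i (1::real)) + norm (k *\<^sub>R axis j (1::real))"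
    by (rule norm_triangle_ineq)
  also have "\<dots> = \<bar>s\<bar> + \<bar>k\<bar>" by simp
  finally show ?thesis using assms by simp
qed

lemma mixed_mvt:
  fixes f :: "real^'n::finite \<Rightarrow> real"
  assumes U: "open U" and inU: "\<forall>p. dist p x \<le> 2*h \<longrightarrow> p \<in> U" and sm: "smooth_on U f" and h: "h > 0"
  shows "\<exists>p. dist p x \<le> 2*h \<and>
     f (x + h *\<^sub>R axis j 1 + h *\<^sub>R axis i 1) - f (x + h *\<^sub>R axis i 1) - f (x + h *\<^sub>R axis j 1) + f x
       = h * h * pd j (pd i f) p"
proof -
  let ?v = "axis i (1::real)" and ?w = "axis j (1::real)"
  have dU: "\<And>F p. smooth_on U F \<Longrightarrow> dist p x \<le> 2*h \<Longrightarrow> F differentiable (at p)"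
    using smooth_diff U inU by blast
  have smi: "smooth_on U (pd i f)" using sm by (rule smooth_pd)
  define \<phi> where "\<phi> s = f ((x + h *\<^sub>R ?w) + s *\<^sub>R ?v) - f (x + s *\<^sub>R ?v)" for s
  have "\<And>s. 0 \<le> s \<Longrightarrow> s \<le> h \<Longrightarrow> (\<phi> has_field_derivative
      (pd i f ((x + h *\<^sub>R ?w) + s *\<^sub>R ?v) - pd i f (x + s *\<^sub>R ?v))) (at s)"
  proof -
    fix s assume s0: "0 \<le> s" and s1: "s \<le> h"
    have s: "0 \<le> s \<and> s \<le> h" using s0 s1 by simp
    have d1: "dist ((x + h *\<^sub>R ?w) + s *\<^sub>R ?v) x \<le> 2*h"
      using dist_two[of h h s x j i] s h by (simp add: add_ac)
    have d2: "dist (x + s *\<^sub>R ?v) x \<le> 2*h"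
      using dist_two[of s h 0 x i j] s h by simp
    show "(\<phi> has_field_derivative
      (pd i f ((x + h *\<^sub>R ?w) + s *\<^sub>R ?v) - pd i f (x + s *\<^sub>R ?v))) (at s)"
      unfolding \<phi>_def
      by (intro DERIV_diff line_deriv dU[OF sm] d1 d2)
  qed
  from MVT2[OF h this] obtain s1 where s1: "0 < s1" "s1 < h"
    "\<phi> h - \<phi> 0 = (h - 0) * (pd i f ((x + h *\<^sub>R ?w) + s1 *\<^sub>R ?v) - pd i f (x + s1 *\<^sub>R ?v))"
    by blast
  define \<psi> where "\<psi> k = pd i f ((x + s1 *\<^sub>R ?v) + k *\<^sub>R ?w)" for k
  have "\<And>k. 0 \<le> k \<Longrightarrow> k \<le> h \<Longrightarrow> (\<psi> has_field_derivative pd j (pd i f) ((x + s1 *\<^sub>R ?v) + k *\<^sub>R ?w)) (at k)"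
  proof -
    fix k assume k0: "0 \<le> k" and k1: "k \<le> h"
    have k: "0 \<le> k \<and> k \<le> h" using k0 k1 by simp
    have "dist ((x + s1 *\<^sub>R ?v) + k *\<^sub>R ?w) x \<le> 2*h"
      using dist_two[of s1 h k x i j] s1 k by simp
    thus "(\<psi> has_field_derivative pd j (pd i f) ((x + s1 *\<^sub>R ?v) + k *\<^sub>R ?w)) (at k)"
      unfolding \<psi>_def by (intro line_deriv dU[OF smi])
  qed
  from MVT2[OF h this] obtain k1 where k1: "0 < k1" "k1 < h"
    "\<psi> h - \<psi> 0 = (h - 0) * pd j (pd i f) ((x + s1 *\<^sub>R ?v) + k1 *\<^sub>R ?w)"
    by blast
  have dp: "dist ((x + s1 *\<^sub>R ?v) + k1 *\<^sub>R ?w) x \<le> 2*h"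
    using dist_two[of s1 h k1 x i j] s1 k1 by simp
  have e1: "\<phi> h - \<phi> 0 = f (x + h *\<^sub>R ?w + h *\<^sub>R ?v) - f (x + h *\<^sub>R ?v) - f (x + h *\<^sub>R ?w) + f x"
    unfolding \<phi>_def by (simp add: add_ac)
  have e2: "pd i f ((x + h *\<^sub>R ?w) + s1 *\<^sub>R ?v) - pd i f (x + s1 *\<^sub>R ?v) = \<psi> h - \<psi> 0"
    unfolding \<psi>_def by (simp add: add_ac)
  show ?thesis
    by (intro exI[of _ "(x + s1 *\<^sub>R ?v) + k1 *\<^sub>R ?w"] conjI dp)
       (use e1 e2 s1(3) k1(3) in simp)
qed

lemma schwarz:
  fixes f :: "real^'n::finite \<Rightarrow> real"
  assumes U: "open U" and x: "x \<in> U" and sm: "smooth_on U f"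
  shows "pd i (pd j f) x = pd j (pd i f) x"
proof (rule ccontr)
  let ?A = "pd j (pd i f)" and ?B = "pd i (pd j f)"
  assume ne: "?B x \<noteq> ?A x"
  define d where "d = \<bar>?A x - ?B x\<bar>"
  have d: "d > 0" using ne by (simp add: d_def)
  have smA: "smooth_on U ?A" and smB: "smooth_on U ?B" using sm by (simp_all add: smooth_pd)
  have cA: "continuous (at x) ?A" using smooth_diff[OF smA U x] differentiable_imp_continuous_within by blast
  have cB: "continuous (at x) ?B" using smooth_diff[OF smB U x] differentiable_imp_continuous_within by blast
  obtain dA where dA: "dA > 0" "\<forall>y. dist y x < dA \<longrightarrow> dist (?A y) (?A x) < d/2"
    using cA d unfolding continuous_at_eps_delta by (meson half_gt_zero)
  obtain dB where dB: "dB > 0" "\<forall>y. dist y x < dB \<longrightarrow> dist (?B y) (?B x) < d/2"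
    using cB d unfolding continuous_at_eps_delta by (meson half_gt_zero)
  obtain r where r: "r > 0" "ball x r \<subseteq> U" using U x open_contains_ball by blast
  define h where "h = min r (min dA dB) / 4"
  have h: "h > 0" using r dA dB by (simp add: h_def)
  have inU: "\<forall>p. dist p x \<le> 2*h \<longrightarrow> p \<in> U"
  proof (intro allI impI)
    fix p assume "dist p x \<le> 2*h"
    hence "dist x p < r" using h r by (simp add: h_def dist_commute)
    thus "p \<in> U" using r by auto
  qed
  obtain p where p: "dist p x \<le> 2*h"
    "f (x + h *\<^sub>R axis j 1 + h *\<^sub>R axis i 1) - f (x + h *\<^sub>R axis i 1) - f (x + h *\<^sub>R axis j 1) + f x
       = h * h * ?A p"
    using mixed_mvt[OF U inU sm h, of j i] by blast
  obtain q where q: "dist q x \<le> 2*h"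
    "f (x + h *\<^sub>R axis i 1 + h *\<^sub>R axis j 1) - f (x + h *\<^sub>R axis j 1) - f (x + h *\<^sub>R axis i 1) + f x
       = h * h * ?B q"
    using mixed_mvt[OF U inU sm h, of i j] by blast
  have e: "f (x + h *\<^sub>R axis j 1 + h *\<^sub>R axis i 1) = f (x + h *\<^sub>R axis i 1 + h *\<^sub>R axis j 1)"
    by (simp add: add_ac)
  have "h * h * ?A p = h * h * ?B q" using p(2) q(2) e by linarith
  hence eq: "?A p = ?B q" using h by simp
  have "dist p x < dA" "dist q x < dB" using p(1) q(1) h dA dB by (simp_all add: h_def)
  hence "\<bar>?A p - ?A x\<bar> < d/2" "\<bar>?B q - ?B x\<bar> < d/2" using dA dB by (auto simp: dist_real_def)
  hence "\<bar>?A x - ?B x\<bar> < d" using eq by linarith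
  thus False by (simp add: d_def)
qed

lemma minv_props:
  fixes M :: "real^'n::finite^'n"
  assumes "invertible M"
  shows "M ** matrix_inv M = mat 1" "matrix_inv M ** M = mat 1"
proof -
  have "\<exists>A'. M ** A' = mat 1 \<and> A' ** M = mat 1" using assms unfolding invertible_def by blast
  hence "M ** matrix_inv M = mat 1 \<and> matrix_inv M ** M = mat 1"
    unfolding matrix_inv_def by (rule someI_ex)
  thus "M ** matrix_inv M = mat 1" "matrix_inv M ** M = mat 1" by auto
qed

lemma minv_unique:
  fixes M B :: "real^'n::finite^'n"
  assumes "M ** B = mat 1"
  shows "matrix_inv M = B"
proof -
  have BM: "B ** M = mat 1" using assms matrix_left_right_inverse by blast
  hence inv: "invertible M" using assms unfolding invertible_def by blast
  have "matrix_inv M = matrix_inv M ** (M ** B)" using assms by simp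
  also have "\<dots> = (matrix_inv M ** M) ** B" by (simp add: matrix_mul_assoc)
  also have "\<dots> = B" using minv_props[OF inv] by simp
  finally show ?thesis .
qed

lemma posdef_invertible:
  fixes M :: "real^'n::finite^'n"
  assumes "\<forall>v. v \<noteq> 0 \<longrightarrow> v \<bullet> (M *v v) > 0"
  shows "invertible M"
proof -
  have "\<forall>x. M *v x = 0 \<longrightarrow> x = 0"
  proof (intro allI impI)
    fix x assume "M *v x = 0"
    thus "x = 0" using assms by (metis inner_zero_right less_irrefl)
  qed
  then obtain B where "B ** M = mat 1" using matrix_left_invertible_ker by blast
  thus ?thesis unfolding invertible_def using matrix_left_right_inverse by blast
qed

lemma cramer_inv:
  fixes M :: "real^'n::finite^'n"
  assumes d: "det M \<noteq> 0"
  shows "matrix_inv M $ k $ j = det (\<chi> r c. if c = k then axis j 1 $ r else M $ r $ c) / det M"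
proof -
  have inv: "invertible M" using d invertible_det_nz by blast
  define x where "x = (\<chi> k. matrix_inv M $ k $ j)"
  have "M *v x = axis j 1"
  proof -
    have "(M *v x) $ r = (M ** matrix_inv M) $ r $ j" for r
      by (simp add: x_def matrix_vector_mult_def matrix_matrix_mult_def)
    thus ?thesis using minv_props(1)[OF inv] by (simp add: vec_eq_iff mat_def axis_def)
  qed
  hence "x = (\<chi> k. det (\<chi> r c. if c = k then axis j 1 $ r else M $ r $ c) / det M)"
    using cramer[OF d] by blast
  hence "x $ k = det (\<chi> r c. if c = k then axis j 1 $ r else M $ r $ c) / det M" by simp
  thus ?thesis by (simp add: x_def)
qed

lemma fd_prod:
  fixes f :: "'i \<Rightarrow> real \<Rightarrow> real"
  shows "finite S \<Longrightarrow> (\<forall>i\<in>S. f i field_differentiable (at t0)) \<Longrightarrow>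
     (\<lambda>t. \<Prod>i\<in>S. f i t) field_differentiable (at t0)"
proof (induction S rule: finite_induct)
  case empty thus ?case by simp
next
  case (insert a S)
  thus ?case by (simp add: field_differentiable_mult)
qed

lemma det_fd:
  fixes M :: "real \<Rightarrow> real^'n::finite^'n"
  assumes "\<forall>r c. (\<lambda>t. M t $ r $ c) field_differentiable (at t0)"
  shows "(\<lambda>t. det (M t)) field_differentiable (at t0)"
  unfolding det_def
  by (intro field_differentiable_sum field_differentiable_mult field_differentiable_const fd_prod)
     (use assms in auto)

lemma minv_scale:
  fixes M :: "real^'n::finite^'n"
  assumes "invertible M" "c \<noteq> 0"
  shows "matrix_inv (c *\<^sub>R M) = inverse c *\<^sub>R matrix_inv M"
proof (rule minv_unique)
  show "(c *\<^sub>R M) ** (inverse c *\<^sub>R matrix_inv M) = mat 1"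
  proof -
    have "((c *\<^sub>R M) ** (inverse c *\<^sub>R matrix_inv M)) $ i $ j = (M ** matrix_inv M) $ i $ j" for i j
      unfolding matrix_matrix_mult_def using assms(2) by (simp add: field_simps)
    thus ?thesis using minv_props(1)[OF assms(1)] by (simp add: vec_eq_iff)
  qed
qed

lemma charpoly_block:
  fixes M P :: "real^'n::finite^'n"
  assumes M: "\<forall>c. c \<noteq> nn \<longrightarrow> M $ nn $ c = 0" and P: "\<forall>r c. c \<noteq> nn \<longrightarrow> P $ r $ c = 0"
    and Pn: "P $ nn $ nn = 0"
  shows "charpoly (M + t *\<^sub>R P) = charpoly M"
  unfolding charpoly_def det_def
proof (rule sum.cong[OF refl])
  fix p assume "p \<in> {p. p permutes (UNIV::'n set)}"
  hence pp: "p permutes (UNIV::'n set)" by simp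
  show "of_int (sign p) * (\<Prod>i\<in>UNIV. (\<chi> i j. (if i = j then [:0, 1:] else 0) - [:(M + t *\<^sub>R P) $ i $ j:]) $ i $ p i) =
        of_int (sign p) * (\<Prod>i\<in>UNIV. (\<chi> i j. (if i = j then [:0, 1:] else 0) - [:M $ i $ j:]) $ i $ p i)"
  proof (cases "p nn = nn")
    case False
    have z1: "(\<chi> i j. (if i = j then [:0, 1:] else 0) - [:(M + t *\<^sub>R P) $ i $ j:]) $ nn $ p nn = (0::real poly)"
      using False M P Pn by (cases "p nn = nn") auto
    have z2: "(\<chi> i j. (if i = j then [:0, 1:] else 0) - [:M $ i $ j:]) $ nn $ p nn = (0::real poly)"
      using False M by auto
    show ?thesis
    proof -
      have "(\<Prod>i\<in>UNIV. (\<chi> i j. (if i = j then [:0, 1:] else 0) - [:(M + t *\<^sub>R P) $ i $ j:]) $ i $ p i) = 0"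
        by (rule prod_zero) (simp, use z1 in blast)
      moreover have "(\<Prod>i\<in>UNIV. (\<chi> i j. (if i = j then [:0, 1:] else 0) - [:M $ i $ j:]) $ i $ p i) = 0"
        by (rule prod_zero) (simp, use z2 in blast)
      ultimately show ?thesis by (simp only: mult_zero_right)
    qed
  next
    case True
    have "\<And>i. (\<chi> i j. (if i = j then [:0, 1:] else 0) - [:(M + t *\<^sub>R P) $ i $ j:]) $ i $ p i =
          (\<chi> i j. (if i = j then [:0, 1:] else 0) - [:M $ i $ j:]) $ i $ p i"
    proof -
      fix i
      show "(\<chi> i j. (if i = j then [:0, 1:] else 0) - [:(M + t *\<^sub>R P) $ i $ j:]) $ i $ p i =
          (\<chi> i j. (if i = j then [:0, 1:] else 0) - [:M $ i $ j:]) $ i $ p i"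
      proof (cases "p i = nn")
        case True2: True
        hence "i = nn" using True pp by (metis permutes_inj injD)
        thus ?thesis using True Pn by simp
      next
        case False
        thus ?thesis using P by simp
      qed
    qed
    thus ?thesis by (simp only:)
  qed
qed

lemma Fcoef_zero:
  fixes g0 A :: "real^'n::finite^'n"
  assumes M: "\<forall>c. c \<noteq> nn \<longrightarrow> (matrix_inv g0 ** A) $ nn $ c = 0"
    and P: "\<forall>r c. c \<noteq> nn \<longrightarrow> (matrix_inv g0 ** (\<chi> a b. if a = i \<and> b = j then 1 else 0)) $ r $ c = 0"
    and Pn: "(matrix_inv g0 ** (\<chi> a b. if a = i \<and> b = j then 1 else 0)) $ nn $ nn = 0"
  shows "Fcoef F idx g0 A i j = 0"
proof -
  let ?E = "(\<chi> a b. if a = i \<and> b = j then 1 else 0) :: real^'n^'n"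
  have dist: "matrix_inv g0 ** (A + t *\<^sub>R ?E) = matrix_inv g0 ** A + t *\<^sub>R (matrix_inv g0 ** ?E)" for t
    by (simp add: vec_eq_iff matrix_matrix_mult_def sum.distrib sum_distrib_left algebra_simps)
  have "\<And>t. F (\<chi> m. esym (idx m) (matrix_inv g0 ** (A + t *\<^sub>R ?E))) = F (\<chi> m. esym (idx m) (matrix_inv g0 ** A))"
    unfolding dist esym_def using charpoly_block[OF M P Pn] by simp
  hence "(\<lambda>t. F (\<chi> m. esym (idx m) (matrix_inv g0 ** (A + t *\<^sub>R ?E)))) = (\<lambda>t. F (\<chi> m. esym (idx m) (matrix_inv g0 ** A)))"
    by (rule ext)
  thus ?thesis unfolding Fcoef_def by (simp add: DERIV_imp_deriv)
qed

lemma sum_if1[simp]: fixes f :: "'a::finite \<Rightarrow> real" shows "(\<Sum>l\<in>UNIV. f l * (if l = k then c else 0)) = f k * c"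
proof -
  have "(\<Sum>l\<in>UNIV. f l * (if l = k then c else 0)) = (\<Sum>l\<in>UNIV. if l = k then f l * c else 0)"
    by (rule sum.cong) auto
  thus ?thesis by simp
qed
lemma sum_if2[simp]: fixes f :: "'a::finite \<Rightarrow> real" shows "(\<Sum>l\<in>UNIV. f l * (if k = l then c else 0)) = f k * c"
proof -
  have "(\<Sum>l\<in>UNIV. f l * (if k = l then c else 0)) = (\<Sum>l\<in>UNIV. if l = k then f l * c else 0)"
    by (rule sum.cong) auto
  thus ?thesis by simp
qed
lemma sum_if3[simp]: fixes f :: "'a::finite \<Rightarrow> real" shows "(\<Sum>l\<in>UNIV. (if l = k then c else 0) * f l) = c * f k"
proof -
  have "(\<Sum>l\<in>UNIV. (if l = k then c else 0) * f l) = (\<Sum>l\<in>UNIV. if l = k then c * f l else 0)"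
    by (rule sum.cong) auto
  thus ?thesis by simp
qed
lemma sum_if4[simp]: fixes f :: "'a::finite \<Rightarrow> real" shows "(\<Sum>l\<in>UNIV. (if k = l then c else 0) * f l) = c * f k"
proof -
  have "(\<Sum>l\<in>UNIV. (if k = l then c else 0) * f l) = (\<Sum>l\<in>UNIV. if l = k then c * f l else 0)"
    by (rule sum.cong) auto
  thus ?thesis by simp
qed
lemma sum_single: fixes F :: "'a::finite \<Rightarrow> real"
  assumes "\<forall>l. l \<noteq> k \<longrightarrow> F l = 0" shows "(\<Sum>l\<in>UNIV. F l) = F k"
proof -
  have "(\<Sum>l\<in>UNIV. F l) = (\<Sum>l\<in>UNIV. if l = k then F l else 0)"
    by (rule sum.cong) (use assms in auto)
  thus ?thesis by simp
qed

locale fermi =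
  fixes g :: "real^'n::finite \<Rightarrow> real^'n^'n" and u :: "real^'n \<Rightarrow> real"
    and x0 :: "real^'n" and nn :: 'n and U :: "(real^'n) set" and mu muhat :: real
  assumes U_open: "open U" and x0U: "x0 \<in> U" and bdry: "x0 $ nn = 0"
    and g_smooth: "\<forall>i j. smooth_on U (\<lambda>x. g x $ i $ j)"
    and u_smooth: "smooth_on U u"
    and g_metric: "\<forall>x\<in>U. x $ nn \<ge> 0 \<longrightarrow>
        (\<forall>i j. g x $ i $ j = g x $ j $ i) \<and> (\<forall>v. v \<noteq> 0 \<longrightarrow> v \<bullet> (g x *v v) > 0)"
    and fermi: "\<forall>x\<in>U. x $ nn \<ge> 0 \<longrightarrow>
        g x $ nn $ nn = 1 \<and> (\<forall>a. a \<noteq> nn \<longrightarrow> g x $ a $ nn = 0 \<and> g x $ nn $ a = 0)"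
    and flat: "\<forall>x\<in>U. x $ nn \<ge> 0 \<longrightarrow> flat_at g x"
    and umbilic: "\<forall>x\<in>U. x $ nn = 0 \<longrightarrow>
        (\<forall>a b. a \<noteq> nn \<longrightarrow> b \<noteq> nn \<longrightarrow> sff g nn a b x = mu * g x $ a $ b)"
    and umbilic_hat: "\<forall>x\<in>U. x $ nn = 0 \<longrightarrow>
        (\<forall>a b. a \<noteq> nn \<longrightarrow> b \<noteq> nn \<longrightarrow> sff (conf g u) nn a b x = muhat * conf g u x $ a $ b)"
begin

definition hs where "hs y \<longleftrightarrow> y \<in> U \<and> 0 \<le> y $ nn"
definition bd where "bd y \<longleftrightarrow> y \<in> U \<and> y $ nn = 0"

lemma bd_hs: "bd y \<Longrightarrow> hs y" by (simp add: hs_def bd_def)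
lemma x0bd: "bd x0" using x0U bdry by (simp add: bd_def)

lemma smooth_g: "smooth_on U (\<lambda>x. g x $ i $ j)" using g_smooth by blast

lemma sdiff: "smooth_on U f \<Longrightarrow> y \<in> U \<Longrightarrow> f differentiable (at y)"
  using smooth_diff U_open by blast

lemma diff_g: "y \<in> U \<Longrightarrow> (\<lambda>x. g x $ i $ j) differentiable (at y)"
  using sdiff smooth_g by blast
lemma diff_pdg: "y \<in> U \<Longrightarrow> pd l (\<lambda>x. g x $ i $ j) differentiable (at y)"
  using sdiff smooth_g smooth_pd by blast
lemma diff_u: "y \<in> U \<Longrightarrow> u differentiable (at y)"
  using sdiff u_smooth by blast
lemma diff_pdu: "y \<in> U \<Longrightarrow> pd i u differentiable (at y)"
  using sdiff u_smooth smooth_pd by blast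
lemma diff_pdpdu: "y \<in> U \<Longrightarrow> pd i (pd j u) differentiable (at y)"
  using sdiff u_smooth smooth_pd by blast

lemma ev_tan:
  assumes "y \<in> U" "i \<noteq> nn"
  shows "eventually (\<lambda>t. y + t *\<^sub>R axis i 1 \<in> U \<and> (y + t *\<^sub>R axis i 1) $ nn = y $ nn) (nhds 0)"
proof -
  obtain r where r: "r > 0" "ball y r \<subseteq> U" using U_open assms(1) open_contains_ball by blast
  have "\<forall>t. dist t 0 < r \<longrightarrow> y + t *\<^sub>R axis i 1 \<in> U \<and> (y + t *\<^sub>R axis i 1) $ nn = y $ nn"
  proof (intro allI impI conjI)
    fix t :: real assume "dist t 0 < r"
    hence "dist y (y + t *\<^sub>R axis i 1) < r" by (simp add: dist_norm)
    thus "y + t *\<^sub>R axis i 1 \<in> U" using r by auto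
    show "(y + t *\<^sub>R axis i 1) $ nn = y $ nn" using assms(2) by (simp add: axis_def)
  qed
  thus ?thesis unfolding eventually_nhds_metric using r by blast
qed

lemma half_line:
  assumes "hs y"
  shows "\<exists>e>0. \<forall>t. 0 \<le> t \<and> t < e \<longrightarrow> hs (y + t *\<^sub>R axis i 1)"
proof -
  have yU: "y \<in> U" using assms by (simp add: hs_def)
  obtain r where r: "r > 0" "ball y r \<subseteq> U" using U_open yU open_contains_ball by blast
  have "\<forall>t. 0 \<le> t \<and> t < r \<longrightarrow> hs (y + t *\<^sub>R axis i 1)"
  proof (intro allI impI)
    fix t :: real assume t: "0 \<le> t \<and> t < r"
    hence "dist y (y + t *\<^sub>R axis i 1) < r" by (simp add: dist_norm)
    hence "y + t *\<^sub>R axis i 1 \<in> U" using r by auto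
    moreover have "0 \<le> (y + t *\<^sub>R axis i 1) $ nn" using assms t by (simp add: axis_def hs_def)
    ultimately show "hs (y + t *\<^sub>R axis i 1)" by (simp add: hs_def)
  qed
  thus ?thesis using r by blast
qed

lemma pd_hs_eq:
  assumes "hs y" "f differentiable (at y)" "h differentiable (at y)" "\<forall>z. hs z \<longrightarrow> f z = h z"
  shows "pd i f y = pd i h y"
proof -
  obtain e where e: "e > 0" "\<forall>t. 0 \<le> t \<and> t < e \<longrightarrow> hs (y + t *\<^sub>R axis i 1)"
    using half_line[OF assms(1)] by blast
  show ?thesis
    by (rule halfline_eq[OF line_deriv0[OF assms(2)] line_deriv0[OF assms(3)] e(1)]) (use e assms(4) in auto)
qed

lemma pd_const: "pd i (\<lambda>z. c) y = 0"
  by (rule pd_from_deriv) simp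

lemma pd_hs_const:
  assumes "hs y" "f differentiable (at y)" "\<forall>z. hs z \<longrightarrow> f z = c"
  shows "pd i f y = 0"
  using pd_hs_eq[OF assms(1,2), of "\<lambda>z. c"] assms(3) pd_const by simp

lemma pd_bd_eq:
  assumes "bd y" "i \<noteq> nn" "\<forall>z. bd z \<longrightarrow> f z = h z"
  shows "pd i f y = pd i h y"
proof (rule pd_cong_ev)
  show "\<forall>\<^sub>F t in nhds 0. f (y + t *\<^sub>R axis i 1) = h (y + t *\<^sub>R axis i 1)"
    using ev_tan[of y i] assms by (auto simp: bd_def elim!: eventually_mono)
qed

lemma pd_U_eq:
  assumes "y \<in> U" "\<forall>z. z \<in> U \<longrightarrow> f z = h z"
  shows "pd i f y = pd i h y"
proof (rule pd_cong_ev)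
  obtain r where r: "r > 0" "ball y r \<subseteq> U" using U_open assms(1) open_contains_ball by blast
  have "\<forall>t. dist t 0 < r \<longrightarrow> f (y + t *\<^sub>R axis i 1) = h (y + t *\<^sub>R axis i 1)"
  proof (intro allI impI)
    fix t :: real assume "dist t 0 < r"
    hence "dist y (y + t *\<^sub>R axis i 1) < r" by (simp add: dist_norm)
    thus "f (y + t *\<^sub>R axis i 1) = h (y + t *\<^sub>R axis i 1)" using r assms(2) by auto
  qed
  thus "\<forall>\<^sub>F t in nhds 0. f (y + t *\<^sub>R axis i 1) = h (y + t *\<^sub>R axis i 1)"
    unfolding eventually_nhds_metric using r by blast
qed

lemma g_nn_row: "hs y \<Longrightarrow> g y $ nn $ k = (if k = nn then 1 else 0)"
  using fermi by (auto simp: hs_def)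
lemma g_nn_col: "hs y \<Longrightarrow> g y $ k $ nn = (if k = nn then 1 else 0)"
  using fermi by (auto simp: hs_def)
lemma g_sym: "hs y \<Longrightarrow> g y $ i $ j = g y $ j $ i"
  using g_metric by (auto simp: hs_def)
lemma g_inv: "hs y \<Longrightarrow> invertible (g y)"
proof -
  assume "hs y"
  hence "\<forall>v. v \<noteq> 0 \<longrightarrow> v \<bullet> (g y *v v) > 0" using g_metric by (simp add: hs_def)
  thus ?thesis by (rule posdef_invertible)
qed
lemma g_det: "hs y \<Longrightarrow> det (g y) \<noteq> 0"
  using g_inv invertible_det_nz by blast
lemma g_pos: "hs y \<Longrightarrow> g y $ a $ a > 0"
proof -
  assume "hs y"
  hence "axis a 1 \<bullet> (g y *v axis a 1) > 0" using g_metric by (auto simp: hs_def axis_eq_0_iff)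
  moreover have "(g y *v axis a 1) $ a = g y $ a $ a" by (simp add: matrix_vector_mult_def axis_def)
  ultimately show ?thesis by (simp add: inner_axis')
qed

lemma GG1: "hs y \<Longrightarrow> (\<Sum>l\<in>UNIV. ginv g y $ i $ l * g y $ l $ j) = (if i = j then 1 else 0)"
proof -
  assume "hs y"
  from minv_props(2)[OF g_inv[OF this]]
  have "(matrix_inv (g y) ** g y) $ i $ j = mat 1 $ i $ j" by simp
  thus ?thesis by (simp add: ginv_def matrix_matrix_mult_def mat_def)
qed
lemma GG2: "hs y \<Longrightarrow> (\<Sum>l\<in>UNIV. g y $ i $ l * ginv g y $ l $ j) = (if i = j then 1 else 0)"
proof -
  assume "hs y"
  from minv_props(1)[OF g_inv[OF this]]
  have "(g y ** matrix_inv (g y)) $ i $ j = mat 1 $ i $ j" by simp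
  thus ?thesis by (simp add: ginv_def matrix_matrix_mult_def mat_def)
qed

lemma G_nn_col: "hs y \<Longrightarrow> ginv g y $ k $ nn = (if k = nn then 1 else 0)"
proof -
  assume h: "hs y"
  show ?thesis using GG1[OF h, of k nn] by (simp add: g_nn_col[OF h])
qed
lemma G_nn_row: "hs y \<Longrightarrow> ginv g y $ nn $ k = (if k = nn then 1 else 0)"
proof -
  assume h: "hs y"
  show ?thesis using GG2[OF h, of nn k] by (simp add: g_nn_row[OF h])
qed

end

context fermi begin

lemma hsU: "hs y \<Longrightarrow> y \<in> U" by (simp add: hs_def)

lemma dg_nn_row: "hs y \<Longrightarrow> pd i (\<lambda>x. g x $ nn $ k) y = 0"
  by (rule pd_hs_const[where c="if k = nn then 1 else 0"]) (auto simp: diff_g hsU g_nn_row)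
lemma dg_nn_col: "hs y \<Longrightarrow> pd i (\<lambda>x. g x $ k $ nn) y = 0"
  by (rule pd_hs_const[where c="if k = nn then 1 else 0"]) (auto simp: diff_g hsU g_nn_col)
lemma dg_sym: "hs y \<Longrightarrow> pd i (\<lambda>x. g x $ a $ b) y = pd i (\<lambda>x. g x $ b $ a) y"
  by (rule pd_hs_eq) (auto simp: diff_g hsU g_sym)

lemma christ_nn_nn: "hs y \<Longrightarrow> christ g k nn nn y = 0"
  by (simp add: christ_def dg_nn_row dg_nn_col)

lemma christ_n_nb: "hs y \<Longrightarrow> christ g nn nn b y = 0"
  by (simp add: christ_def G_nn_row dg_nn_row dg_nn_col)
lemma christ_n_bn: "hs y \<Longrightarrow> christ g nn b nn y = 0"
  by (simp add: christ_def G_nn_row dg_nn_row dg_nn_col)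
lemma christ_n_ab: "hs y \<Longrightarrow> christ g nn a b y = - (1/2) * pd nn (\<lambda>x. g x $ a $ b) y"
  by (simp add: christ_def G_nn_row dg_nn_row dg_nn_col)

lemma normal_g: "hs y \<Longrightarrow> inner_normal g nn y j = (if j = nn then 1 else 0)"
  by (simp add: inner_normal_def G_nn_col G_nn_row)

lemma sff_g: "hs y \<Longrightarrow> sff g nn a b y = christ g nn a b y"
  by (simp add: sff_def normal_g g_nn_col)

lemma dgn_tan: "bd y \<Longrightarrow> a \<noteq> nn \<Longrightarrow> b \<noteq> nn \<Longrightarrow> pd nn (\<lambda>x. g x $ a $ b) y = -2 * mu * g y $ a $ b"
proof -
  assume y: "bd y" and a: "a \<noteq> nn" and b: "b \<noteq> nn"
  have "sff g nn a b y = mu * g y $ a $ b" using umbilic y a b by (auto simp: bd_def)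
  thus ?thesis using sff_g[OF bd_hs[OF y]] christ_n_ab[OF bd_hs[OF y]] by simp
qed

lemma dgn1: "bd y \<Longrightarrow> a \<noteq> nn \<Longrightarrow> pd nn (\<lambda>x. g x $ a $ l) y = -2 * mu * g y $ a $ l"
proof -
  assume y: "bd y" and a: "a \<noteq> nn"
  show ?thesis
  proof (cases "l = nn")
    case True thus ?thesis using dg_nn_col[OF bd_hs[OF y]] g_nn_col[OF bd_hs[OF y]] a by simp
  next
    case False thus ?thesis using dgn_tan[OF y a] by simp
  qed
qed
lemma dgn2: "bd y \<Longrightarrow> a \<noteq> nn \<Longrightarrow> pd nn (\<lambda>x. g x $ l $ a) y = -2 * mu * g y $ l $ a"
  using dgn1[of y a l] dg_sym[OF bd_hs, of y nn l a] g_sym[OF bd_hs, of y l a] by simp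

lemma christ_nb: "bd y \<Longrightarrow> b \<noteq> nn \<Longrightarrow> christ g k nn b y = - mu * (if k = b then 1 else 0)"
proof -
  assume y: "bd y" and b: "b \<noteq> nn"
  have h: "hs y" using bd_hs[OF y] .
  have "christ g k nn b y = (1/2) * (\<Sum>l\<in>UNIV. ginv g y $ k $ l * (-2 * mu * g y $ l $ b))"
    unfolding christ_def using dgn1[OF y b] dg_nn_row[OF h] dg_nn_col[OF h] g_sym[OF h, of b]
    by simp
  also have "\<dots> = - mu * (\<Sum>l\<in>UNIV. ginv g y $ k $ l * g y $ l $ b)"
    by (simp add: sum_distrib_left algebra_simps)
  finally show ?thesis using GG1[OF h, of k b] by simp
qed

lemma christ_bn: "bd y \<Longrightarrow> b \<noteq> nn \<Longrightarrow> christ g k b nn y = - mu * (if k = b then 1 else 0)"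
proof -
  assume y: "bd y" and b: "b \<noteq> nn"
  have h: "hs y" using bd_hs[OF y] .
  have "christ g k b nn y = (1/2) * (\<Sum>l\<in>UNIV. ginv g y $ k $ l * (-2 * mu * g y $ l $ b))"
    unfolding christ_def using dgn1[OF y b] dg_nn_row[OF h] dg_nn_col[OF h] g_sym[OF h, of b]
    by simp
  also have "\<dots> = - mu * (\<Sum>l\<in>UNIV. ginv g y $ k $ l * g y $ l $ b)"
    by (simp add: sum_distrib_left algebra_simps)
  finally show ?thesis using GG1[OF h, of k b] by simp
qed

lemma christ_n_ab_bd: "bd y \<Longrightarrow> a \<noteq> nn \<Longrightarrow> b \<noteq> nn \<Longrightarrow> christ g nn a b y = mu * g y $ a $ b"
  using christ_n_ab[OF bd_hs] dgn_tan by simp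

end

context fermi begin

lemma conf_entry: "conf g u x $ i $ j = exp (-2 * u x) * g x $ i $ j"
  by (simp add: conf_def)

lemma diff_expu: "y \<in> U \<Longrightarrow> (\<lambda>x. exp (c * u x)) differentiable (at y)"
proof -
  assume "y \<in> U"
  then obtain u' where u': "(u has_derivative u') (at y)" using diff_u differentiable_def by blast
  show ?thesis unfolding differentiable_def
    by (rule exI, rule derivative_intros, rule derivative_intros, rule u')
qed

lemma diff_conf: "y \<in> U \<Longrightarrow> (\<lambda>x. conf g u x $ i $ j) differentiable (at y)"
  unfolding conf_entry by (intro differentiable_mult diff_expu diff_g)

lemma Gc: "hs y \<Longrightarrow> ginv (conf g u) y $ i $ j = exp (2 * u y) * ginv g y $ i $ j"
proof -
  assume h: "hs y"
  have "ginv (conf g u) y = inverse (exp (-2 * u y)) *\<^sub>R ginv g y"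
    unfolding ginv_def conf_def by (rule minv_scale[OF g_inv[OF h]]) simp
  thus ?thesis by (simp add: exp_minus[symmetric])
qed

lemma exp2: "exp (2 * x) = exp x * exp (x::real)"
  by (simp add: exp_add[symmetric])

lemma normal_c: "hs y \<Longrightarrow> inner_normal (conf g u) nn y j = (if j = nn then exp (u y) else 0)"
proof -
  assume h: "hs y"
  have s: "sqrt (exp (2 * u y)) = exp (u y)" by (simp add: exp2)
  show ?thesis unfolding inner_normal_def Gc[OF h] using G_nn_col[OF h, of j] G_nn_col[OF h, of nn] s
    by (auto simp: exp2)
qed

lemma dconf_n: "y \<in> U \<Longrightarrow> pd nn (\<lambda>x. conf g u x $ a $ b) y =
   exp (-2 * u y) * (-2 * pd nn u y) * g y $ a $ b + exp (-2 * u y) * pd nn (\<lambda>x. g x $ a $ b) y"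
proof -
  assume yU: "y \<in> U"
  note du = line_deriv0[OF diff_u[OF yU], of nn]
  note dg = line_deriv0[OF diff_g[OF yU], of nn a b]
  show ?thesis unfolding conf_entry
    by (rule pd_from_deriv) (auto intro!: derivative_eq_intros du dg simp: algebra_simps)
qed

lemma christ_c: "hs y \<Longrightarrow> a \<noteq> nn \<Longrightarrow> b \<noteq> nn \<Longrightarrow>
    christ (conf g u) nn a b y = - (1/2) * exp (2 * u y) * pd nn (\<lambda>x. conf g u x $ a $ b) y"
proof -
  assume h: "hs y" and a: "a \<noteq> nn" and b: "b \<noteq> nn"
  have z: "pd c (\<lambda>x. conf g u x $ d $ nn) y = 0" if "d \<noteq> nn" for c d
    by (rule pd_hs_const[OF h diff_conf[OF hsU[OF h]], where c=0]) (use that in \<open>auto simp: conf_entry g_nn_col\<close>)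
  show ?thesis unfolding christ_def Gc[OF h]
    by (subst sum_single[where k=nn]) (auto simp: G_nn_row[OF h] z[OF a] z[OF b])
qed

lemma sff_c: "hs y \<Longrightarrow> a \<noteq> nn \<Longrightarrow> b \<noteq> nn \<Longrightarrow>
    sff (conf g u) nn a b y = christ (conf g u) nn a b y * exp (-2 * u y) * exp (u y)"
proof -
  assume h: "hs y" and a: "a \<noteq> nn" and b: "b \<noteq> nn"
  show ?thesis unfolding sff_def
    by (subst sum_single[where k=nn]) (auto simp: normal_c[OF h] conf_entry g_nn_col[OF h])
qed

lemma un_bd: "bd y \<Longrightarrow> a \<noteq> nn \<Longrightarrow> pd nn u y = muhat * exp (- u y) - mu"
proof -
  assume y: "bd y" and a: "a \<noteq> nn"
  have h: "hs y" using bd_hs[OF y] .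
  have yU: "y \<in> U" using hsU[OF h] .
  have "sff (conf g u) nn a a y = muhat * conf g u y $ a $ a" using umbilic_hat y a by (auto simp: bd_def)
  hence eq: "- (1/2) * exp (2 * u y) * (exp (-2 * u y) * (-2 * pd nn u y) * g y $ a $ a + exp (-2 * u y) * (-2 * mu * g y $ a $ a))
      * exp (-2 * u y) * exp (u y) = muhat * (exp (-2 * u y) * g y $ a $ a)"
    unfolding sff_c[OF h a a] christ_c[OF h a a] dconf_n[OF yU] dgn_tan[OF y a a] by (simp only: conf_entry)
  define E where "E = exp (u y)"
  have E: "E > 0" by (simp add: E_def)
  have e1: "exp (2 * u y) = E * E" "exp (-2 * u y) = 1 / (E * E)" "exp (- u y) = 1 / E"
    by (simp_all add: E_def exp2 exp_minus[symmetric] exp_add[symmetric] field_simps)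
  have gp: "g y $ a $ a > 0" using g_pos[OF h] .
  from eq have "(E*E*E*E*2) * (E * (mu * g y $ a $ a) + E * (pd nn u y * g y $ a $ a)) = (E*E*E*E*2) * (muhat * g y $ a $ a)"
    unfolding e1 E_def[symmetric] using E by (simp add: field_simps)
  hence "E * (mu * g y $ a $ a) + E * (pd nn u y * g y $ a $ a) = muhat * g y $ a $ a"
    using E by simp
  hence "g y $ a $ a * ((pd nn u y + mu) * E) = g y $ a $ a * muhat"
    by (simp add: algebra_simps)
  hence "(pd nn u y + mu) * E = muhat" using gp by simp
  thus ?thesis unfolding e1 using E by (simp add: field_simps)
qed

end

context fermi begin

lemma d_tan_un: "bd y \<Longrightarrow> c \<noteq> nn \<Longrightarrow> pd c (pd nn u) y = - muhat * exp (- u y) * pd c u y"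
proof -
  assume y: "bd y" and c: "c \<noteq> nn"
  have yU: "y \<in> U" using y by (simp add: bd_def)
  have "pd c (pd nn u) y = pd c (\<lambda>z. muhat * exp (- u z) - mu) y"
    by (rule pd_bd_eq[OF y c]) (use un_bd c in blast)
  also have "\<dots> = - muhat * exp (- u y) * pd c u y"
  proof -
    note du = line_deriv0[OF diff_u[OF yU], of c]
    show ?thesis by (rule pd_from_deriv) (auto intro!: derivative_eq_intros du simp: algebra_simps)
  qed
  finally show ?thesis .
qed

lemma schw_u: "y \<in> U \<Longrightarrow> pd i (pd j u) y = pd j (pd i u) y"
  using schwarz[OF U_open _ u_smooth] by blast

lemma dn_tan_u: "bd y \<Longrightarrow> c \<noteq> nn \<Longrightarrow> pd nn (pd c u) y = - muhat * exp (- u y) * pd c u y"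
  using schw_u[of y nn c] d_tan_un[of y c] by (simp add: bd_def)

lemma Ahat_nn_c: "c \<noteq> nn \<Longrightarrow> Ahat g u x0 $ nn $ c = 0"
proof -
  assume c: "c \<noteq> nn"
  have h: "hs x0" using bd_hs[OF x0bd] .
  have s: "(\<Sum>k\<in>UNIV. christ g k nn c x0 * pd k u x0) = - mu * pd c u x0"
    by (subst sum_single[where k=c]) (auto simp: christ_nb[OF x0bd c])
  show ?thesis
    unfolding Ahat_def hess_def
    using s dn_tan_u[OF x0bd c] g_nn_row[OF h, of c] c
    by (simp add: un_bd[OF x0bd c] algebra_simps)
qed

lemma partA: "a \<noteq> nn \<Longrightarrow> Fcoef F idx (g x0) (Ahat g u x0) a nn = 0"
proof -
  assume a: "a \<noteq> nn"
  have h: "hs x0" using bd_hs[OF x0bd] .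
  have G: "matrix_inv (g x0) $ nn $ k = (if k = nn then 1 else 0)" for k
    using G_nn_row[OF h, of k] by (simp add: ginv_def)
  show ?thesis
  proof (rule Fcoef_zero)
    show "\<forall>c. c \<noteq> nn \<longrightarrow> (matrix_inv (g x0) ** Ahat g u x0) $ nn $ c = 0"
      using Ahat_nn_c by (simp add: matrix_matrix_mult_def G)
    show "\<forall>r c. c \<noteq> nn \<longrightarrow> (matrix_inv (g x0) ** (\<chi> i j. if i = a \<and> j = nn then 1 else 0)) $ r $ c = 0"
      by (simp add: matrix_matrix_mult_def)
    show "(matrix_inv (g x0) ** (\<chi> i j. if i = a \<and> j = nn then 1 else 0)) $ nn $ nn = 0"
      using a by (simp add: matrix_matrix_mult_def G)
  qed
qed

end

lemma fdD: "(\<lambda>t. f (y + t *\<^sub>R axis i 1)) field_differentiable (at 0) \<Longrightarrow>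
   ((\<lambda>t. f (y + t *\<^sub>R axis i 1)) has_field_derivative pd i f y) (at 0)"
  unfolding pd_def using DERIV_deriv_iff_field_differentiable by blast

lemma Dfd: "(f has_field_derivative D) (at x) \<Longrightarrow> f field_differentiable (at x)"
  unfolding field_differentiable_def by blast

context fermi begin

abbreviation "en \<equiv> axis nn (1::real)"

lemma fd_g: "(\<lambda>t. g (x0 + t *\<^sub>R en) $ r $ c) field_differentiable (at 0)"
  using Dfd[OF line_deriv0[OF diff_g[OF x0U]]] by blast

lemma fd_pdg: "(\<lambda>t. pd l (\<lambda>x. g x $ i $ j) (x0 + t *\<^sub>R en)) field_differentiable (at 0)"
  using Dfd[OF line_deriv0[OF diff_pdg[OF x0U]]] by blast

lemma fd_u: "(\<lambda>t. u (x0 + t *\<^sub>R en)) field_differentiable (at 0)"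
  using Dfd[OF line_deriv0[OF diff_u[OF x0U]]] by blast
lemma fd_pdu: "(\<lambda>t. pd i u (x0 + t *\<^sub>R en)) field_differentiable (at 0)"
  using Dfd[OF line_deriv0[OF diff_pdu[OF x0U]]] by blast

lemma fd_G: "(\<lambda>t. ginv g (x0 + t *\<^sub>R en) $ k $ j) field_differentiable (at 0)"
proof -
  define D where "D t = det (g (x0 + t *\<^sub>R en))" for t
  define Nm where "Nm t = det (\<chi> r c. if c = k then axis j 1 $ r else g (x0 + t *\<^sub>R en) $ r $ c)" for t
  have fdD: "D field_differentiable (at 0)" unfolding D_def
    by (rule det_fd) (use fd_g in blast)
  have fdN: "Nm field_differentiable (at 0)" unfolding Nm_def
  proof (rule det_fd, intro allI)
    fix r c
    show "(\<lambda>t. (\<chi> r c. if c = k then axis j 1 $ r else g (x0 + t *\<^sub>R en) $ r $ c) $ r $ c) field_differentiable (at 0)"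
      by (cases "c = k") (simp_all add: fd_g)
  qed
  have D0: "D 0 \<noteq> 0" unfolding D_def using g_det[OF bd_hs[OF x0bd]] by simp
  have cD: "continuous (at 0) D" using fdD field_differentiable_imp_continuous_at by blast
  obtain \<delta> where \<delta>: "\<delta> > 0" "\<forall>t. dist t 0 < \<delta> \<longrightarrow> dist (D t) (D 0) < \<bar>D 0\<bar>"
    using cD D0 unfolding continuous_at_eps_delta by (meson zero_less_abs_iff)
  have ev: "eventually (\<lambda>t. Nm t / D t = ginv g (x0 + t *\<^sub>R en) $ k $ j) (nhds 0)"
    unfolding eventually_nhds_metric
  proof (intro exI[of _ \<delta>] conjI allI impI)
    show "\<delta> > 0" using \<delta> by simp
    fix t :: real assume "dist t 0 < \<delta>"
    hence "dist (D t) (D 0) < \<bar>D 0\<bar>" using \<delta> by blast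
    hence "D t \<noteq> 0" by (auto simp: dist_real_def)
    thus "Nm t / D t = ginv g (x0 + t *\<^sub>R en) $ k $ j"
      unfolding ginv_def Nm_def using cramer_inv[of "g (x0 + t *\<^sub>R en)" k j] by (simp add: D_def)
  qed
  have "((\<lambda>t. Nm t / D t) has_field_derivative deriv (\<lambda>t. Nm t / D t) 0) (at 0)"
    using field_differentiable_divide[OF fdN fdD D0] DERIV_deriv_iff_field_differentiable by blast
  hence "((\<lambda>t. ginv g (x0 + t *\<^sub>R en) $ k $ j) has_field_derivative deriv (\<lambda>t. Nm t / D t) 0) (at 0)"
  proof -
    have "((\<lambda>t. Nm t / D t) has_field_derivative deriv (\<lambda>t. Nm t / D t) 0) (at 0) \<longleftrightarrow>
          ((\<lambda>t. ginv g (x0 + t *\<^sub>R en) $ k $ j) has_field_derivative deriv (\<lambda>t. Nm t / D t) 0) (at 0)"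
      by (rule DERIV_cong_ev) (use ev in auto)
    thus ?thesis using \<open>((\<lambda>t. Nm t / D t) has_field_derivative deriv (\<lambda>t. Nm t / D t) 0) (at 0)\<close> by blast
  qed
  thus ?thesis by (rule Dfd)
qed

lemma fd_christ: "(\<lambda>t. christ g k i j (x0 + t *\<^sub>R en)) field_differentiable (at 0)"
  unfolding christ_def
  by (intro field_differentiable_mult field_differentiable_sum field_differentiable_add
      field_differentiable_diff field_differentiable_const fd_G fd_pdg)

lemma fd_N: "(\<lambda>t. gradnorm2 g u (x0 + t *\<^sub>R en)) field_differentiable (at 0)"
  unfolding gradnorm2_def
  by (intro field_differentiable_mult field_differentiable_sum fd_G fd_pdu)

end

context fermi begin

lemma hs_x0: "hs x0" using bd_hs[OF x0bd] .

lemma D5: "a \<noteq> nn \<Longrightarrow> b \<noteq> nn \<Longrightarrow>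
   pd nn (christ g k a b) x0 = (if k = nn then - mu * mu * g x0 $ a $ b else 0)"
proof -
  assume a: "a \<noteq> nn" and b: "b \<noteq> nn"
  have R: "riemann g k nn a b x0 = 0" using flat x0U bdry by (simp add: flat_at_def)
  have p1: "pd a (christ g k nn b) x0 = 0"
  proof -
    have "pd a (christ g k nn b) x0 = pd a (\<lambda>z. - mu * (if k = b then 1 else 0)) x0"
      by (rule pd_bd_eq[OF x0bd a]) (use christ_nb b in blast)
    thus ?thesis by (simp add: pd_const)
  qed
  have c1: "christ g k nn m x0 = (if m = nn then 0 else - mu * (if k = m then 1 else 0))" for m
    using christ_nn_nn[OF hs_x0] christ_nb[OF x0bd] by auto
  have s1: "(\<Sum>m\<in>UNIV. christ g k nn m x0 * christ g m a b x0) = (if k = nn then 0 else - mu * christ g k a b x0)"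
    by (subst sum_single[where k=k]) (auto simp: c1)
  have s2: "(\<Sum>m\<in>UNIV. christ g k a m x0 * christ g m nn b x0) = - mu * christ g k a b x0"
    by (subst sum_single[where k=b]) (auto simp: christ_nb[OF x0bd b])
  have "pd nn (christ g k a b) x0 = (if k = nn then - mu * christ g k a b x0 else 0)"
    using R unfolding riemann_def sum_subtractf s1 s2 p1 by (auto split: if_splits)
  thus ?thesis using christ_n_ab_bd[OF x0bd a b] by simp
qed

lemma D4: "a \<noteq> nn \<Longrightarrow> b \<noteq> nn \<Longrightarrow>
   pd nn (pd a (pd b u)) x0 = muhat * exp (- u x0) * (pd a u x0 * pd b u x0 - pd a (pd b u) x0)"
proof -
  assume a: "a \<noteq> nn" and b: "b \<noteq> nn"
  have "pd nn (pd a (pd b u)) x0 = pd a (pd nn (pd b u)) x0"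
    using schwarz[OF U_open x0U smooth_pd[OF u_smooth]] by blast
  also have "\<dots> = pd a (\<lambda>z. - muhat * exp (- u z) * pd b u z) x0"
    by (rule pd_bd_eq[OF x0bd a]) (use dn_tan_u b in blast)
  also have "\<dots> = muhat * exp (- u x0) * (pd a u x0 * pd b u x0 - pd a (pd b u) x0)"
  proof -
    note du = line_deriv0[OF diff_u[OF x0U], of a]
    note dpu = line_deriv0[OF diff_pdu[OF x0U, of b], of a]
    show ?thesis by (rule pd_from_deriv) (auto intro!: derivative_eq_intros du dpu simp: algebra_simps)
  qed
  finally show ?thesis .
qed

lemma stepA: "(\<Sum>l\<in>UNIV. pd nn (\<lambda>y. ginv g y $ i $ l) x0 * g x0 $ l $ j
                + pd nn (\<lambda>y. g y $ l $ j) x0 * ginv g x0 $ i $ l) = 0"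
proof -
  have D: "((\<lambda>t. (\<lambda>z. \<Sum>l\<in>UNIV. ginv g z $ i $ l * g z $ l $ j) (x0 + t *\<^sub>R en)) has_field_derivative
     (\<Sum>l\<in>UNIV. pd nn (\<lambda>y. ginv g y $ i $ l) x0 * g x0 $ l $ j
                + pd nn (\<lambda>y. g y $ l $ j) x0 * ginv g x0 $ i $ l)) (at 0)"
    by (intro DERIV_sum) (auto intro!: derivative_eq_intros fdD[OF fd_G] line_deriv0[OF diff_g[OF x0U]] simp: algebra_simps)
  have C: "((\<lambda>t. (\<lambda>z. if i = j then 1 else 0 :: real) (x0 + t *\<^sub>R en)) has_field_derivative 0) (at 0)"
    by simp
  obtain e where e: "e > 0" "\<forall>t. 0 \<le> t \<and> t < e \<longrightarrow> hs (x0 + t *\<^sub>R en)"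
    using half_line[OF hs_x0] by blast
  show ?thesis
    by (rule halfline_eq[OF D C e(1)]) (use e GG1 in auto)
qed

end

context fermi begin

lemma dG_val: "pd nn (\<lambda>y. ginv g y $ i $ j) x0 = 2 * mu * (ginv g x0 $ i $ j - (if i = nn \<and> j = nn then 1 else 0))"
proof -
  define X :: "real^'n^'n" where "X = (\<chi> i j. pd nn (\<lambda>y. ginv g y $ i $ j) x0)"
  define Y :: "real^'n^'n" where "Y = (\<chi> i j. pd nn (\<lambda>y. g y $ i $ j) x0)"
  define G0 where "G0 = ginv g x0"
  define g0 where "g0 = g x0"
  define Enn :: "real^'n^'n" where "Enn = (\<chi> i j. if i = nn \<and> j = nn then 1 else 0)"
  have inv: "g0 ** G0 = mat 1" "G0 ** g0 = mat 1"
    using minv_props[OF g_inv[OF hs_x0]] by (simp_all add: G0_def g0_def ginv_def)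
  have XgGY: "X ** g0 = - (G0 ** Y)"
  proof -
    have "(X ** g0) $ i $ j = - (G0 ** Y) $ i $ j" for i j
      using stepA[of i j]
      by (simp add: X_def Y_def G0_def g0_def matrix_matrix_mult_def sum.distrib algebra_simps
          eq_neg_iff_add_eq_0)
    thus ?thesis by (simp add: vec_eq_iff)
  qed
  have Yv: "Y = (-2 * mu) *\<^sub>R (g0 - Enn)"
  proof -
    have "Y $ i $ j = ((-2 * mu) *\<^sub>R (g0 - Enn)) $ i $ j" for i j
    proof (cases "i = nn")
      case True thus ?thesis
        using dg_nn_row[OF hs_x0, of nn j] g_nn_row[OF hs_x0, of j] by (simp add: Y_def Enn_def g0_def)
    next
      case False thus ?thesis
        using dgn1[OF x0bd False, of j] by (simp add: Y_def Enn_def g0_def)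
    qed
    thus ?thesis by (simp add: vec_eq_iff)
  qed
  have GE: "G0 ** Enn = Enn"
  proof -
    have "(G0 ** Enn) $ i $ j = Enn $ i $ j" for i j
      using G_nn_col[OF hs_x0, of i] by (cases "j = nn") (simp_all add: matrix_matrix_mult_def Enn_def G0_def)
    thus ?thesis by (simp add: vec_eq_iff)
  qed
  have EG: "Enn ** G0 = Enn"
  proof -
    have "(Enn ** G0) $ i $ j = Enn $ i $ j" for i j
      using G_nn_row[OF hs_x0, of j] by (cases "i = nn") (simp_all add: matrix_matrix_mult_def Enn_def G0_def)
    thus ?thesis by (simp add: vec_eq_iff)
  qed
  have l1: "A ** (c *\<^sub>R B) = c *\<^sub>R (A ** B)" for A B :: "real^'n^'n" and c
    by (simp add: vec_eq_iff matrix_matrix_mult_def sum_distrib_left algebra_simps)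
  have l2: "(c *\<^sub>R A) ** B = c *\<^sub>R (A ** B)" for A B :: "real^'n^'n" and c
    by (simp add: vec_eq_iff matrix_matrix_mult_def sum_distrib_left algebra_simps)
  have l3: "A ** (B - C) = A ** B - A ** C" for A B C :: "real^'n^'n"
    by (simp add: vec_eq_iff matrix_matrix_mult_def sum_subtractf algebra_simps)
  have l4: "(B - C) ** A = B ** A - C ** A" for A B C :: "real^'n^'n"
    by (simp add: vec_eq_iff matrix_matrix_mult_def sum_subtractf algebra_simps)
  have l5: "(- B) ** A = - (B ** A)" for A B :: "real^'n^'n"
    by (simp add: vec_eq_iff matrix_matrix_mult_def sum_negf)
  have "X = X ** (g0 ** G0)" using inv by simp
  also have "\<dots> = (X ** g0) ** G0" by (simp add: matrix_mul_assoc)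
  also have "\<dots> = - ((G0 ** Y) ** G0)" by (simp add: XgGY l5)
  also have "\<dots> = (2 * mu) *\<^sub>R (G0 - Enn)"
    unfolding Yv l1 l2 l3 l4 inv GE EG by simp
  finally have "X $ i $ j = ((2 * mu) *\<^sub>R (G0 - Enn)) $ i $ j" by simp
  thus ?thesis by (simp add: X_def G0_def Enn_def)
qed

end

context fermi begin

definition "sS = muhat * exp (- u x0)"
definition "wW = pd nn (pd nn u) x0"
definition "uN = pd nn u x0"
definition "cC = wW + sS * uN"

lemma uN_val: "a \<noteq> nn \<Longrightarrow> uN = sS - mu"
  using un_bd[OF x0bd] by (simp add: uN_def sS_def)

lemma du_all: "pd nn (pd i u) x0 = - sS * pd i u x0 + (if i = nn then cC else 0)"
proof (cases "i = nn")
  case True thus ?thesis by (simp add: cC_def wW_def uN_def)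
next
  case False thus ?thesis using dn_tan_u[OF x0bd False] by (simp add: sS_def)
qed

lemma DN: "((\<lambda>t. gradnorm2 g u (x0 + t *\<^sub>R en)) has_field_derivative
   (\<Sum>i\<in>UNIV. \<Sum>j\<in>UNIV. pd nn (\<lambda>y. ginv g y $ i $ j) x0 * pd i u x0 * pd j u x0
      + ginv g x0 $ i $ j * pd nn (pd i u) x0 * pd j u x0 + ginv g x0 $ i $ j * pd i u x0 * pd nn (pd j u) x0)) (at 0)"
  unfolding gradnorm2_def
  by (intro DERIV_sum) (auto intro!: derivative_eq_intros fdD[OF fd_G] line_deriv0[OF diff_pdu[OF x0U]] simp: algebra_simps)

lemma D7: "pd nn (gradnorm2 g u) x0 = 2 * mu * (gradnorm2 g u x0 - uN * uN) + 2 * (- sS * gradnorm2 g u x0 + cC * uN)"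
proof -
  define G where "G i j = ginv g x0 $ i $ j" for i j
  define v where "v i = pd i u x0" for i
  define R where "R i = (\<Sum>j\<in>UNIV. G i j * v j)" for i
  have Gr: "G nn j = (if j = nn then 1 else 0)" for j using G_nn_row[OF hs_x0] by (simp add: G_def)
  have Gc: "G i nn = (if i = nn then 1 else 0)" for i using G_nn_col[OF hs_x0] by (simp add: G_def)
  have N0: "gradnorm2 g u x0 = (\<Sum>i\<in>UNIV. v i * R i)"
    by (simp add: gradnorm2_def G_def v_def R_def sum_distrib_left algebra_simps)
  have inner: "(\<Sum>j\<in>UNIV. (2 * mu * (G i j - (if i = nn \<and> j = nn then 1 else 0))) * v i * v j
      + G i j * (- sS * v i + (if i = nn then cC else 0)) * v j + G i j * v i * (- sS * v j + (if j = nn then cC else 0)))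
      = 2 * mu * (v i * R i) - (if i = nn then 2 * mu * uN * uN else 0) - 2 * sS * (v i * R i)
        + (if i = nn then cC * R i else 0) + v i * cC * G i nn" for i
  proof -
    have "(\<Sum>j\<in>UNIV. (2 * mu * (G i j - (if i = nn \<and> j = nn then 1 else 0))) * v i * v j
      + G i j * (- sS * v i + (if i = nn then cC else 0)) * v j + G i j * v i * (- sS * v j + (if j = nn then cC else 0)))
      = (\<Sum>j\<in>UNIV. 2 * mu * v i * (G i j * v j)) - (\<Sum>j\<in>UNIV. (if i = nn \<and> j = nn then 2 * mu * v i * v j else 0))
        - (\<Sum>j\<in>UNIV. 2 * sS * v i * (G i j * v j)) + (\<Sum>j\<in>UNIV. (if i = nn then cC * (G i j * v j) else 0))
        + (\<Sum>j\<in>UNIV. (if j = nn then v i * cC * G i j else 0))"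
    proof -
      have pw: "(2 * mu * (G i j - (if i = nn \<and> j = nn then 1 else 0))) * v i * v j
      + G i j * (- sS * v i + (if i = nn then cC else 0)) * v j + G i j * v i * (- sS * v j + (if j = nn then cC else 0))
        = 2 * mu * v i * (G i j * v j) - (if i = nn \<and> j = nn then 2 * mu * v i * v j else 0)
        - 2 * sS * v i * (G i j * v j) + (if i = nn then cC * (G i j * v j) else 0)
        + (if j = nn then v i * cC * G i j else 0)" for j
        by (cases "i = nn"; cases "j = nn") (simp_all add: algebra_simps)
      show ?thesis unfolding pw by (simp only: sum.distrib sum_subtractf)
    qed
    also have "\<dots> = 2 * mu * (v i * R i) - (if i = nn then 2 * mu * uN * uN else 0) - 2 * sS * (v i * R i)
        + (if i = nn then cC * R i else 0) + v i * cC * G i nn"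
      by (simp add: R_def sum_distrib_left[symmetric] v_def uN_def mult.assoc)
    finally show ?thesis .
  qed
  have "pd nn (gradnorm2 g u) x0 = (\<Sum>i\<in>UNIV. \<Sum>j\<in>UNIV. (2 * mu * (G i j - (if i = nn \<and> j = nn then 1 else 0))) * v i * v j
      + G i j * (- sS * v i + (if i = nn then cC else 0)) * v j + G i j * v i * (- sS * v j + (if j = nn then cC else 0)))"
    using pd_from_deriv[OF DN] by (simp add: dG_val du_all G_def v_def)
  also have "\<dots> = (\<Sum>i\<in>UNIV. 2 * mu * (v i * R i) - (if i = nn then 2 * mu * uN * uN else 0) - 2 * sS * (v i * R i)
        + (if i = nn then cC * R i else 0) + v i * cC * G i nn)"
    by (simp only: inner)
  also have "\<dots> = 2 * mu * (\<Sum>i\<in>UNIV. v i * R i) - 2 * mu * uN * uN - 2 * sS * (\<Sum>i\<in>UNIV. v i * R i)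
        + cC * R nn + cC * v nn"
  proof -
    have pw: "2 * mu * (v i * R i) - (if i = nn then 2 * mu * uN * uN else 0) - 2 * sS * (v i * R i)
        + (if i = nn then cC * R i else 0) + v i * cC * G i nn
        = 2 * mu * (v i * R i) - (if i = nn then 2 * mu * uN * uN else 0) - 2 * sS * (v i * R i)
        + (if i = nn then cC * R i else 0) + (if i = nn then cC * v i else 0)" for i
      by (simp add: Gc)
    show ?thesis unfolding pw by (simp only: sum.distrib sum_subtractf sum_distrib_left[symmetric]) simp
  qed
  also have "R nn = uN" by (simp add: R_def Gr v_def uN_def)
  also have "v nn = uN" by (simp add: v_def uN_def)
  finally show ?thesis unfolding N0 by (simp add: algebra_simps)
qed

end

context fermi begin

lemma Aab: "Ahat g u y $ a $ b = pd a (pd b u) y - (\<Sum>k\<in>UNIV. christ g k a b y * pd k u y)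
     + pd a u y * pd b u y - 1/2 * gradnorm2 g u y * g y $ a $ b"
  by (simp add: Ahat_def hess_def)

lemma DA: "((\<lambda>t. Ahat g u (x0 + t *\<^sub>R en) $ a $ b) has_field_derivative
   (pd nn (pd a (pd b u)) x0
    - (\<Sum>k\<in>UNIV. pd nn (christ g k a b) x0 * pd k u x0 + christ g k a b x0 * pd nn (pd k u) x0)
    + (pd nn (pd a u) x0 * pd b u x0 + pd a u x0 * pd nn (pd b u) x0)
    - 1/2 * (pd nn (gradnorm2 g u) x0 * g x0 $ a $ b + gradnorm2 g u x0 * pd nn (\<lambda>y. g y $ a $ b) x0))) (at 0)"
  unfolding Aab
  by (auto intro!: derivative_eq_intros DERIV_sum line_deriv0[OF diff_pdpdu[OF x0U]] fdD[OF fd_christ]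
      line_deriv0[OF diff_pdu[OF x0U]] fdD[OF fd_N] line_deriv0[OF diff_g[OF x0U]] simp: algebra_simps)

lemma partB:
  assumes a: "a \<noteq> nn" and b: "b \<noteq> nn"
  shows "cov2 g (Ahat g u) a b nn x0
     = 2 * mu * Ahat g u x0 $ a $ b
       - muhat * exp (- u x0) * (Ahat g u x0 $ a $ b + Ahat g u x0 $ nn $ nn * g x0 $ a $ b)"
proof -
  define T where "T = (\<Sum>k\<in>UNIV. christ g k a b x0 * pd k u x0)"
  define P where "P = pd a (pd b u) x0"
  define N where "N = gradnorm2 g u x0"
  define gab where "gab = g x0 $ a $ b"
  have S1: "(\<Sum>k\<in>UNIV. pd nn (christ g k a b) x0 * pd k u x0) = - mu * mu * gab * uN"
    by (subst sum_single[where k=nn]) (auto simp: D5[OF a b] gab_def uN_def)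
  have S2: "(\<Sum>k\<in>UNIV. christ g k a b x0 * pd nn (pd k u) x0) = - sS * T + mu * gab * cC"
  proof -
    have pw: "christ g k a b x0 * pd nn (pd k u) x0
        = - sS * (christ g k a b x0 * pd k u x0) + (if k = nn then christ g k a b x0 * cC else 0)" for k
      by (simp add: du_all algebra_simps)
    show ?thesis unfolding pw sum.distrib T_def sum_distrib_left[symmetric]
      using christ_n_ab_bd[OF x0bd a b] by (simp add: gab_def)
  qed
  have pdA: "pd nn (\<lambda>y. Ahat g u y $ a $ b) x0 =
     s * (pd a u x0 * pd b u x0 - P) - (- mu * mu * gab * uN + (- sS * T + mu * gab * cC))
     + ((- sS * pd a u x0) * pd b u x0 + pd a u x0 * (- sS * pd b u x0))
     - 1/2 * ((2 * mu * (N - uN * uN) + 2 * (- sS * N + cC * uN)) * gab + N * (-2 * mu * gab))"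
    if "s = sS" for s
    using pd_from_deriv[OF DA[of a b]] that
    unfolding sum.distrib S1 S2 D4[OF a b] D7 dgn_tan[OF x0bd a b]
    by (simp add: du_all a b sS_def P_def N_def gab_def)
  have Aab0: "Ahat g u x0 $ a $ b = P - T + pd a u x0 * pd b u x0 - 1/2 * N * gab"
    by (simp add: Aab P_def T_def N_def gab_def)
  have Ann: "Ahat g u x0 $ nn $ nn = wW + uN * uN - 1/2 * N"
    by (simp add: Aab christ_nn_nn[OF hs_x0] g_nn_row[OF hs_x0] wW_def uN_def N_def)
  have S3: "(\<Sum>k\<in>UNIV. christ g k nn a x0 * Ahat g u x0 $ k $ b + christ g k nn b x0 * Ahat g u x0 $ a $ k)
      = - 2 * mu * Ahat g u x0 $ a $ b"
  proof -
    have "(\<Sum>k\<in>UNIV. christ g k nn a x0 * Ahat g u x0 $ k $ b) = - mu * Ahat g u x0 $ a $ b"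
      by (subst sum_single[where k=a]) (auto simp: christ_nb[OF x0bd a])
    moreover have "(\<Sum>k\<in>UNIV. christ g k nn b x0 * Ahat g u x0 $ a $ k) = - mu * Ahat g u x0 $ a $ b"
      by (subst sum_single[where k=b]) (auto simp: christ_nb[OF x0bd b])
    ultimately show ?thesis by (simp add: sum.distrib)
  qed
  have cov: "cov2 g (Ahat g u) a b nn x0 = pd nn (\<lambda>y. Ahat g u y $ a $ b) x0 + 2 * mu * Ahat g u x0 $ a $ b"
    unfolding cov2_def S3 by simp
  have un: "uN = sS - mu" using uN_val[OF a] .
  have e: "muhat * exp (- u x0) = sS" by (simp add: sS_def)
  show ?thesis
    unfolding cov pdA[OF refl] e Aab0 Ann cC_def un gab_def[symmetric]
    by (simp add: algebra_simps)
qed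

end

theorem mainTheorem5:
  fixes g :: "real^'n::finite \<Rightarrow> real^'n^'n" and u :: "real^'n \<Rightarrow> real"
    and x0 :: "real^'n" and nn :: 'n and U :: "(real^'n) set"
    and mu muhat :: real and F :: "real^'n \<Rightarrow> real" and idx :: "'n \<Rightarrow> nat"
  assumes U: "open U" "x0 \<in> U" and bdry: "x0 $ nn = 0"
    and g_smooth: "\<forall>i j. smooth_on U (\<lambda>x. g x $ i $ j)"
    and u_smooth: "smooth_on U u"
    and g_metric: "\<forall>x\<in>U. x $ nn \<ge> 0 \<longrightarrow>
        (\<forall>i j. g x $ i $ j = g x $ j $ i) \<and> (\<forall>v. v \<noteq> 0 \<longrightarrow> v \<bullet> (g x *v v) > 0)"
    and fermi: "\<forall>x\<in>U. x $ nn \<ge> 0 \<longrightarrow>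
        g x $ nn $ nn = 1 \<and> (\<forall>a. a \<noteq> nn \<longrightarrow> g x $ a $ nn = 0 \<and> g x $ nn $ a = 0)"
    and flat: "\<forall>x\<in>U. x $ nn \<ge> 0 \<longrightarrow> flat_at g x"
    and umbilic: "\<forall>x\<in>U. x $ nn = 0 \<longrightarrow>
        (\<forall>a b. a \<noteq> nn \<longrightarrow> b \<noteq> nn \<longrightarrow> sff g nn a b x = mu * g x $ a $ b)"
    and umbilic_hat: "\<forall>x\<in>U. x $ nn = 0 \<longrightarrow>
        (\<forall>a b. a \<noteq> nn \<longrightarrow> b \<noteq> nn \<longrightarrow> sff (conf g u) nn a b x = muhat * conf g u x $ a $ b)"
    and idx: "bij_betw idx UNIV {1..CARD('n)}"
    and F_diff: "\<forall>y. F differentiable (at y)"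
  shows "(\<forall>a. a \<noteq> nn \<longrightarrow> Fcoef F idx (g x0) (Ahat g u x0) a nn = 0) \<and>
         (\<forall>a b. a \<noteq> nn \<longrightarrow> b \<noteq> nn \<longrightarrow>
            cov2 g (Ahat g u) a b nn x0
              = 2 * mu * Ahat g u x0 $ a $ b
                - muhat * exp (- u x0) * (Ahat g u x0 $ a $ b + Ahat g u x0 $ nn $ nn * g x0 $ a $ b))"
proof -
  interpret fermi g u x0 nn U mu muhat
    by (rule fermi.intro) (rule U(1) U(2) bdry g_smooth u_smooth g_metric fermi flat umbilic umbilic_hat)+
  show ?thesis using partA partB by blast
qed

end
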